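(* Let $\Gamma$ be a finite simple graph with vertex set $\{1,\dots,V\}$. Let $\mathcal E$ be its set of directed edges, containing both orientations of each undirected edge, so that $|\mathcal E|$ is twice the number of undirected edges. Identify subsets $b\subseteq\mathcal E$ with bit-vectors in $\{0,1\}^{|\mathcal E|}$, and let $\mathrm{popcnt}(b)=|b|$. For $b\subseteq\mathcal E$, let $A(b)$ be the $V\times V$ matrix with $A(b)_{i,j}=1$ if $(j,i)\in b$ and $0$ otherwise. Fix $n=|\mathcal E|/2$ and set $\widetilde N_b=\mathrm{tr}\big(A(b)^n\big)$. Define $$N_b=\sum_{b'\subseteq b}(-1)^{|b|-|b'|}\,\widetilde N_{b'}.$$ Equivalently, ordering the bit-vectors in binary order, $N=Y_{|\mathcal E|}\widetilde N$, where $Y_1=\begin{pmatrix}1&0\\-1&1\end{pmatrix}$ and $Y_m=Y_1\otimes Y_{m-1}$ (Kronecker product) for $m>1$. Let $\mathcal B_{\rm Euler}$ be the set of subsets $b\subseteq\mathcal E$ that contain exactly one orientation of each undirected edge. Then the number $N_{\rm Euler}(\Gamma)$ of Eulerian cycles of $\Gamma$ satisfies $$N_{\rm Euler}(\Gamma)=\frac{2}{|\mathcal E|}\sum_{b\in\mathcal B_{\rm Euler}}N_b.$$ Here Eulerian cycles are counted up to cyclic shift, and a cycle and its reversal are counted as different.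
   Context: An Eulerian cycle is a closed walk traversing every undirected edge of $\Gamma$ exactly once. A periodic orbit of length $n$ is a closed walk of $n$ directed edges, considered up to cyclic shifts. Its support is the set of directed edges it uses. Its repetition number $r_p$ is the number of times it is a repetition of a shorter orbit. One has $\widetilde N_b=n\sum_{\mathrm{supp}(p)\subseteq b}1/r_p$ and $N_b=n\sum_{\mathrm{supp}(p)=b}1/r_p$, where the sums run over periodic orbits of length $n$. *)

theory Defs
  imports "Jordan_Normal_Form.Matrix"
begin

definition simple_graph :: "nat \<Rightarrow> (nat \<times> nat) set \<Rightarrow> bool" where
  "simple_graph V E \<longleftrightarrow> E \<subseteq> {1..V} \<times> {1..V} \<and> (\<forall>i j. (i, j) \<in> E \<longrightarrow> (j, i) \<in> E)
     \<and> (\<forall>i. (i, i) \<notin> E)"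

definition und_edges :: "(nat \<times> nat) set \<Rightarrow> nat set set" where
  "und_edges E = {{i, j} | i j. (i, j) \<in> E}"

definition mtrace :: "'a::comm_ring_1 mat \<Rightarrow> 'a" where
  "mtrace M = (\<Sum>i<dim_row M. M $$ (i, i))"

text \<open>A(b): V x V matrix with A(b)_{i,j} = 1 iff (j,i) \<in> b (vertices 1..V, matrix indices 0..V-1).\<close>
definition adjA :: "nat \<Rightarrow> (nat \<times> nat) set \<Rightarrow> int mat" where
  "adjA V b = mat V V (\<lambda>(i, j). if (j + 1, i + 1) \<in> b then 1 else 0)"

definition Ntilde :: "nat \<Rightarrow> (nat \<times> nat) set \<Rightarrow> (nat \<times> nat) set \<Rightarrow> int" where
  "Ntilde V E b = mtrace (adjA V b ^\<^sub>m (card E div 2))"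

definition Nb :: "nat \<Rightarrow> (nat \<times> nat) set \<Rightarrow> (nat \<times> nat) set \<Rightarrow> int" where
  "Nb V E b = (\<Sum>b'\<in>Pow b. (-1) ^ (card b - card b') * Ntilde V E b')"

definition B_Euler :: "(nat \<times> nat) set \<Rightarrow> (nat \<times> nat) set set" where
  "B_Euler E = {b. b \<subseteq> E \<and> (\<forall>i j. (i, j) \<in> E \<longrightarrow> ((i, j) \<in> b \<longleftrightarrow> (j, i) \<notin> b))}"

definition euler_list :: "(nat \<times> nat) set \<Rightarrow> (nat \<times> nat) list \<Rightarrow> bool" where
  "euler_list E es \<longleftrightarrow> es \<noteq> [] \<and> set es \<subseteq> E
     \<and> (\<forall>k < length es. snd (es ! k) = fst (es ! ((k + 1) mod length es)))
     \<and> distinct (map (\<lambda>(i, j). {i, j}) es)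
     \<and> set (map (\<lambda>(i, j). {i, j}) es) = und_edges E"

definition N_Euler :: "(nat \<times> nat) set \<Rightarrow> nat" where
  "N_Euler E = card {{rotate k es | k. True} | es. euler_list E es}"

end

theory Submission
  imports Defs
begin

fun walk :: "(nat \<times> nat) set \<Rightarrow> (nat \<times> nat) list \<Rightarrow> nat \<Rightarrow> nat \<Rightarrow> bool" where
  "walk b [] u v = (u = v)"
| "walk b (e # es) u v = (e \<in> b \<and> fst e = u \<and> walk b es (snd e) v)"

definition W :: "(nat \<times> nat) set \<Rightarrow> nat \<Rightarrow> nat \<Rightarrow> nat \<Rightarrow> (nat \<times> nat) list set" where
  "W b k u v = {es. length es = k \<and> walk b es u v}"

lemma walk_set: "walk b es u v \<Longrightarrow> set es \<subseteq> b"
  by (induction es arbitrary: u) auto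

lemma finite_W: "finite b \<Longrightarrow> finite (W b k u v)"
  unfolding W_def
  by (rule finite_subset[OF _ finite_lists_length_eq[of b k]]) (auto dest: walk_set)

lemma W_Suc:
  assumes "b \<subseteq> {1..V} \<times> {1..V}"
  shows "W b (Suc k) u w = (\<Union>l\<in>{l. l < V \<and> (u, l+1) \<in> b}. (Cons (u, l+1)) ` W b k (l+1) w)"
proof safe
  fix es assume "es \<in> W b (Suc k) u w"
  then obtain e es' where es: "es = e # es'" "length es' = k" "e \<in> b" "fst e = u" "walk b es' (snd e) w"
    unfolding W_def by (cases es) auto
  then have "snd e \<in> {1..V}" using assms by auto
  then show "es \<in> (\<Union>l\<in>{l. l < V \<and> (u, l+1) \<in> b}. (Cons (u, l+1)) ` W b k (l+1) w)"
    using es by (intro UN_I[of "snd e - 1"]) (auto simp: W_def prod_eq_iff)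
qed (auto simp: W_def)

lemma adj_pow:
  assumes "b \<subseteq> {1..V} \<times> {1..V}" "i < V" "j < V"
  shows "(adjA V b ^\<^sub>m k) $$ (i, j) = int (card (W b k (j+1) (i+1)))"
  using assms(2,3)
proof (induction k arbitrary: i j)
  case 0
  have "W b 0 (j+1) (i+1) = (if i = j then {[]} else {})" by (auto simp: W_def)
  then show ?case using 0 by (simp add: adjA_def)
next
  case (Suc k)
  have car: "adjA V b \<in> carrier_mat V V" by (simp add: adjA_def)
  hence pc: "adjA V b ^\<^sub>m k \<in> carrier_mat V V" by simp
  have fin: "finite b" using assms(1) by (rule finite_subset) auto
  have "(adjA V b ^\<^sub>m Suc k) $$ (i, j) = (\<Sum>l\<in>{0..<V}. (adjA V b ^\<^sub>m k) $$ (i, l) * adjA V b $$ (l, j))"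
    using pc car Suc.prems by (simp add: scalar_prod_def)
  also have "\<dots> = (\<Sum>l\<in>{0..<V}. if (j+1, l+1) \<in> b then int (card (W b k (l+1) (i+1))) else 0)"
    using Suc by (intro sum.cong) (auto simp: adjA_def)
  also have "\<dots> = (\<Sum>l\<in>{l. l < V \<and> (j+1, l+1) \<in> b}. int (card (W b k (l+1) (i+1))))"
    by (subst sum.If_cases) (auto intro!: sum.cong)
  also have "\<dots> = int (\<Sum>l\<in>{l. l < V \<and> (j+1, l+1) \<in> b}. card ((Cons (j+1, l+1)) ` W b k (l+1) (i+1)))"
    by (simp add: card_image)
  also have "\<dots> = int (card (W b (Suc k) (j+1) (i+1)))"
    unfolding W_Suc[OF assms(1)]
    by (subst card_UN_disjoint) (auto simp: finite_W fin)
  finally show ?case .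
qed

definition cyc :: "(nat \<times> nat) list \<Rightarrow> bool" where
  "cyc es = (\<forall>k < length es. snd (es ! k) = fst (es ! ((k + 1) mod length es)))"

definition chain :: "(nat \<times> nat) list \<Rightarrow> bool" where
  "chain es = (\<forall>k. Suc k < length es \<longrightarrow> snd (es ! k) = fst (es ! Suc k))"

definition closedw :: "(nat \<times> nat) set \<Rightarrow> nat \<Rightarrow> (nat \<times> nat) list set" where
  "closedw b m = {es. length es = m \<and> set es \<subseteq> b \<and> cyc es}"

lemma chain_Cons: "es \<noteq> [] \<Longrightarrow> chain (e # es) = (snd e = fst (hd es) \<and> chain es)"
proof
  assume ne: "es \<noteq> []" and c: "chain (e # es)"
  have "snd e = fst (hd es)" using c ne unfolding chain_def
    by (metis hd_conv_nth length_Cons length_greater_0_conv nth_Cons_0 nth_Cons_Suc Suc_less_eq)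
  moreover have "chain es" unfolding chain_def
  proof (intro allI impI)
    fix k assume "Suc k < length es"
    then show "snd (es ! k) = fst (es ! Suc k)" using c unfolding chain_def
      by (metis Suc_less_eq length_Cons nth_Cons_Suc)
  qed
  ultimately show "snd e = fst (hd es) \<and> chain es" by blast
next
  assume ne: "es \<noteq> []" and c: "snd e = fst (hd es) \<and> chain es"
  show "chain (e # es)" unfolding chain_def
  proof (intro allI impI)
    fix k assume k: "Suc k < length (e # es)"
    show "snd ((e # es) ! k) = fst ((e # es) ! Suc k)"
    proof (cases k)
      case 0 then show ?thesis using c ne by (simp add: hd_conv_nth)
    next
      case (Suc k') then show ?thesis using c k unfolding chain_def by simp
    qed
  qed
qed

lemma walk_iff: "walk b es u v = (set es \<subseteq> b \<and> (es = [] \<longrightarrow> u = v) \<and>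
   (es \<noteq> [] \<longrightarrow> fst (hd es) = u \<and> snd (last es) = v \<and> chain es))"
proof (induction es arbitrary: u)
  case Nil then show ?case by simp
next
  case (Cons e es)
  show ?case
  proof (cases "es = []")
    case True then show ?thesis by (auto simp: chain_def)
  next
    case False
    then show ?thesis using Cons chain_Cons[OF False, of e] by auto
  qed
qed

lemma cyc_iff: "es \<noteq> [] \<Longrightarrow> cyc es = (snd (last es) = fst (hd es) \<and> chain es)"
  unfolding cyc_def chain_def
proof safe
  fix k assume ne: "es \<noteq> []" and H: "\<forall>k<length es. snd (es ! k) = fst (es ! ((k + 1) mod length es))"
  show "snd (last es) = fst (hd es)" using H[rule_format, of "length es - 1"] ne
    by (simp add: last_conv_nth hd_conv_nth)
  assume "Suc k < length es" then show "snd (es ! k) = fst (es ! Suc k)"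
    using H[rule_format, of k] by simp
next
  fix k assume ne: "es \<noteq> []" and l: "snd (last es) = fst (hd es)"
    and H: "\<forall>k. Suc k < length es \<longrightarrow> snd (es ! k) = fst (es ! Suc k)" and k: "k < length es"
  show "snd (es ! k) = fst (es ! ((k + 1) mod length es))"
  proof (cases "Suc k < length es")
    case True then show ?thesis using H by simp
  next
    case False
    then have "k = length es - 1" "Suc k = length es" using k by auto
    then show ?thesis using l ne by (simp add: last_conv_nth hd_conv_nth)
  qed
qed

lemma trace_count:
  assumes "b \<subseteq> {1..V} \<times> {1..V}" "m \<ge> 1"
  shows "mtrace (adjA V b ^\<^sub>m m) = int (card (closedw b m))"
proof -
  have fin: "finite b" using assms(1) by (rule finite_subset) auto
  have car: "adjA V b \<in> carrier_mat V V" by (simp add: adjA_def)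
  hence pc: "adjA V b ^\<^sub>m m \<in> carrier_mat V V" by simp
  have eq: "closedw b m = (\<Union>i\<in>{..<V}. W b m (i+1) (i+1))"
  proof safe
    fix es assume es: "es \<in> closedw b m"
    then have ne: "es \<noteq> []" using assms(2) by (auto simp: closedw_def)
    then have "hd es \<in> b" using es by (auto simp: closedw_def)
    then have u: "fst (hd es) \<in> {1..V}" using assms(1) by auto
    show "es \<in> (\<Union>i\<in>{..<V}. W b m (i+1) (i+1))"
      apply (rule UN_I[of "fst (hd es) - 1"])
      using u apply simp
      using u es ne by (auto simp: W_def walk_iff closedw_def cyc_iff)
  next
    fix es i assume "es \<in> W b m (i+1) (i+1)"
    then have "length es = m" "set es \<subseteq> b" "es \<noteq> []" "fst (hd es) = i+1" "snd (last es) = i+1" "chain es"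
      using assms(2) by (auto simp: W_def walk_iff)
    then show "es \<in> closedw b m" 
      by (auto simp: closedw_def cyc_iff)
  qed
  have "mtrace (adjA V b ^\<^sub>m m) = (\<Sum>i<V. int (card (W b m (i+1) (i+1))))"
    unfolding mtrace_def using pc by (intro sum.cong) (auto simp: adj_pow[OF assms(1)])
  also have "\<dots> = int (card (closedw b m))"
    unfolding eq
  proof (subst card_UN_disjoint)
    show "\<forall>i\<in>{..<V}. \<forall>j\<in>{..<V}. i \<noteq> j \<longrightarrow> W b m (i + 1) (i + 1) \<inter> W b m (j + 1) (j + 1) = {}"
      using assms(2) by (auto simp: W_def walk_iff)
  qed (auto simp: finite_W fin)
  finally show ?thesis .
qed


definition D :: "(nat \<times> nat) set \<Rightarrow> nat \<Rightarrow> (nat \<times> nat) list set" where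
  "D c m = {es \<in> closedw c m. set es = c}"

lemma finite_closedw: "finite b \<Longrightarrow> finite (closedw b m)"
  unfolding closedw_def
  by (rule finite_subset[OF _ finite_lists_length_eq[of b m]]) auto

lemma closedw_split: "finite S \<Longrightarrow> card (closedw S m) = (\<Sum>c\<in>Pow S. card (D c m))"
proof -
  assume fin: "finite S"
  have "closedw S m = (\<Union>c\<in>Pow S. D c m)" by (auto simp: closedw_def D_def)
  moreover have "card (\<Union>c\<in>Pow S. D c m) = (\<Sum>c\<in>Pow S. card (D c m))"
    by (rule card_UN_disjoint) (auto simp: D_def intro: finite_subset[OF _ finite_closedw] finite_subset[OF _ fin])
  ultimately show ?thesis by simp
qed

lemma Nb_eq:
  assumes "b \<subseteq> {1..V} \<times> {1..V}" "card E div 2 \<ge> 1"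
  shows "Nb V E b = int (card (D b (card E div 2)))"
proof -
  let ?m = "card E div 2"
  have fin: "finite b" using assms(1) by (rule finite_subset) auto
  have "int (card (D b ?m)) = (\<Sum>T \<in> Pow b. (-1) ^ (card b - card T) * int (card (closedw T ?m)))"
    by (rule inclusion_exclusion_mobius[where g = "\<lambda>S. int (card (closedw S ?m))"])
       (auto simp: closedw_split fin)
  also have "\<dots> = Nb V E b" unfolding Nb_def Ntilde_def
    using assms by (intro sum.cong refl) (auto simp: trace_count)
  finally show ?thesis by simp
qed


lemma und_bij:
  assumes g: "simple_graph V E" and b: "b \<in> B_Euler E"
  shows "bij_betw (\<lambda>(i, j). {i, j}) b (und_edges E)"
proof -
  have bE: "b \<subseteq> E" and bx: "\<And>i j. (i, j) \<in> E \<Longrightarrow> (i, j) \<in> b \<longleftrightarrow> (j, i) \<notin> b"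
    using b by (auto simp: B_Euler_def)
  show ?thesis unfolding bij_betw_def
  proof safe
    show "inj_on (\<lambda>(i, j). {i, j}) b"
    proof (rule inj_onI, clarify)
      fix a c a' c' assume "(a, c) \<in> b" "(a', c') \<in> b" "{a, c} = {a', c'}"
      then show "a = a' \<and> c = c'" using bx bE by (auto simp: doubleton_eq_iff)
    qed
  next
    fix a c assume "(a, c) \<in> b" then show "{a, c} \<in> und_edges E"
      using bE by (auto simp: und_edges_def)
  next
    fix x assume "x \<in> und_edges E"
    then obtain i j where x: "x = {i, j}" "(i, j) \<in> E" by (auto simp: und_edges_def)
    show "x \<in> (\<lambda>(i, j). {i, j}) ` b"
    proof (cases "(i, j) \<in> b")
      case True then show ?thesis using x by force
    next
      case False then have "(j, i) \<in> b" using bx x by auto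
      then show ?thesis using x by (auto intro!: image_eqI[of _ _ "(j, i)"])
    qed
  qed
qed

lemma card_E:
  assumes g: "simple_graph V E"
  shows "card E = 2 * card (und_edges E)"
proof -
  let ?b = "{(i, j) \<in> E. i < j}"
  have sym: "\<And>i j. (i, j) \<in> E \<Longrightarrow> (j, i) \<in> E" and irr: "\<And>i. (i, i) \<notin> E"
    and fin: "finite E"
    using g unfolding simple_graph_def by (auto intro: finite_subset[of E "{1..V} \<times> {1..V}"] simp del: One_nat_def)
  have bB: "?b \<in> B_Euler E" unfolding B_Euler_def using irr
    using sym by (auto; metis linorder_neqE_nat)
  have E: "E = ?b \<union> (\<lambda>(i, j). (j, i)) ` ?b"
  proof safe
    fix i j assume "(i, j) \<in> E" "(i, j) \<notin> (\<lambda>(i, j). (j, i)) ` ?b"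
    moreover have "i \<noteq> j" using irr \<open>(i, j) \<in> E\<close> by auto
    ultimately show "i < j" using sym by (force intro: image_eqI[of _ _ "(j, i)"])
  qed (auto simp: sym)
  have "card E = card ?b + card ((\<lambda>(i, j). (j, i)) ` ?b)"
  proof (subst E, rule card_Un_disjoint)
    have "finite ?b" using fin by (rule rev_finite_subset) auto
    then show "finite ?b" "finite ((\<lambda>(i, j). (j, i)) ` ?b)" by auto
  qed auto
  also have "card ((\<lambda>(i, j). (j, i)) ` ?b) = card ?b"
    by (rule card_image) (auto simp: inj_on_def)
  also have "card ?b = card (und_edges E)"
    using bij_betw_same_card[OF und_bij[OF g bB]] .
  finally show ?thesis by simp
qed


lemma euler_char:
  assumes g: "simple_graph V E" and m1: "card E div 2 \<ge> 1"
  shows "euler_list E es \<longleftrightarrow> (\<exists>b\<in>B_Euler E. es \<in> D b (card E div 2))"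
proof
  let ?f = "\<lambda>(i::nat, j::nat). {i, j}"
  have irr: "\<And>i. (i, i) \<notin> E" using g by (auto simp: simple_graph_def)
  have m: "card E div 2 = card (und_edges E)" using card_E[OF g] by simp
  assume el: "euler_list E es"
  then have ne: "es \<noteq> []" and sub: "set es \<subseteq> E" and cy: "cyc es"
    and dm: "distinct (map ?f es)" and sm: "set (map ?f es) = und_edges E"
    unfolding euler_list_def cyc_def by auto
  have len: "length es = card E div 2"
    using distinct_card[OF dm] sm m by simp
  have "set es \<in> B_Euler E" unfolding B_Euler_def
  proof (intro CollectI conjI allI impI sub)
    fix i j assume ij: "(i, j) \<in> E"
    have "i \<noteq> j" using ij irr by auto
    show "(i, j) \<in> set es \<longleftrightarrow> (j, i) \<notin> set es"
    proof
      assume a: "(i, j) \<in> set es"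
      show "(j, i) \<notin> set es"
      proof
        assume "(j, i) \<in> set es"
        then obtain q where q: "q < length es" "es ! q = (j, i)" by (auto simp: in_set_conv_nth)
        obtain p where p: "p < length es" "es ! p = (i, j)" using a by (auto simp: in_set_conv_nth)
        have "map ?f es ! p = map ?f es ! q" using p q by (auto simp: insert_commute)
        then have "p = q" using dm p q by (metis length_map nth_eq_iff_index_eq)
        then show False using p q \<open>i \<noteq> j\<close> by simp
      qed
    next
      assume a: "(j, i) \<notin> set es"
      have "{i, j} \<in> set (map ?f es)" using sm ij by (auto simp: und_edges_def)
      then obtain x y where "(x, y) \<in> set es" "{x, y} = {i, j}" by auto
      then show "(i, j) \<in> set es" using a by (auto simp: doubleton_eq_iff)
    qed
  qed
  then show "\<exists>b\<in>B_Euler E. es \<in> D b (card E div 2)"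
    using len sub cy by (auto simp: D_def closedw_def)
next
  let ?f = "\<lambda>(i::nat, j::nat). {i, j}"
  have m: "card E div 2 = card (und_edges E)" using card_E[OF g] by simp
  assume "\<exists>b\<in>B_Euler E. es \<in> D b (card E div 2)"
  then obtain b where b: "b \<in> B_Euler E" and len: "length es = card E div 2"
    and se: "set es = b" and cy: "cyc es"
    by (auto simp: D_def closedw_def)
  have bij: "bij_betw ?f b (und_edges E)" by (rule und_bij[OF g b])
  have cb: "card (set es) = length es" using bij_betw_same_card[OF bij] se len m by simp
  have de: "distinct es" using card_distinct[OF cb] .
  have dm: "distinct (map ?f es)" unfolding distinct_map using de bij se by (auto simp: bij_betw_def)
  have sm: "set (map ?f es) = und_edges E" using bij se by (simp add: bij_betw_def)
  have ne: "es \<noteq> []" using len m1 by auto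
  have "set es \<subseteq> E" using b se by (auto simp: B_Euler_def)
  then show "euler_list E es" unfolding euler_list_def using ne cy dm sm
    by (auto simp: cyc_def)
qed


definition R :: "'a list \<Rightarrow> 'a list set" where
  "R es = {rotate k es | k. True}"

lemma cyc_rotate: "cyc es \<Longrightarrow> cyc (rotate k es)"
  unfolding cyc_def
proof (intro allI impI)
  fix i assume H: "\<forall>k<length es. snd (es ! k) = fst (es ! ((k + 1) mod length es))"
    and i: "i < length (rotate k es)"
  let ?n = "length es"
  have i': "i < ?n" using i by simp
  then have n: "?n > 0" by linarith
  have "snd (rotate k es ! i) = snd (es ! ((k + i) mod ?n))" using i by (simp add: nth_rotate)
  also have "\<dots> = fst (es ! (((k + i) mod ?n + 1) mod ?n))" using H n by simp
  also have "((k + i) mod ?n + 1) mod ?n = (k + (i + 1) mod ?n) mod ?n" by (simp add: mod_simps)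
  also have "fst (es ! \<dots>) = fst (rotate k es ! ((i + 1) mod length (rotate k es)))"
    using n by (simp add: nth_rotate)
  finally show "snd (rotate k es ! i) = fst (rotate k es ! ((i + 1) mod length (rotate k es)))" .
qed

lemma euler_rotate: "euler_list E es \<Longrightarrow> euler_list E (rotate k es)"
proof -
  assume "euler_list E es"
  then have "cyc es" and el: "euler_list E es" by (auto simp: euler_list_def cyc_def)
  have "cyc (rotate k es)" by (rule cyc_rotate[OF \<open>cyc es\<close>])
  then show ?thesis using el unfolding euler_list_def cyc_def
    by (auto simp flip: rotate_map)
qed

lemma card_R: "distinct es \<Longrightarrow> es \<noteq> [] \<Longrightarrow> card (R es) = length es"
proof -
  assume d: "distinct es" and ne: "es \<noteq> []"
  have "R es = (\<lambda>k. rotate k es) ` {..<length es}"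
  proof safe
    fix x assume "x \<in> R es"
    then obtain k where "x = rotate k es" by (auto simp: R_def)
    then have "x = rotate (k mod length es) es" by (simp add: rotate_conv_mod[of k])
    then show "x \<in> (\<lambda>k. rotate k es) ` {..<length es}"
      using ne by auto
  qed (auto simp: R_def)
  moreover have "inj_on (\<lambda>k. rotate k es) {..<length es}"
  proof (rule inj_onI)
    fix k l assume k: "k \<in> {..<length es}" and l: "l \<in> {..<length es}" and e: "rotate k es = rotate l es"
    then have "rotate k es ! 0 = rotate l es ! 0" by simp
    then have "es ! k = es ! l" using k l ne nth_rotate[where m=k and n=0 and xs=es] nth_rotate[where m=l and n=0 and xs=es] by simp
    then show "k = l" using d k l by (simp add: nth_eq_iff_index_eq)
  qed
  ultimately show ?thesis by (simp add: card_image)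
qed

lemma R_eq: "y \<in> R x \<Longrightarrow> R y = R x"
proof -
  assume "y \<in> R x"
  then obtain k where y: "y = rotate k x" by (auto simp: R_def)
  have x: "x = rotate (length x - k mod length x) y"
  proof -
    have "rotate (length x - k mod length x) y = rotate (length x - k mod length x + k mod length x) x"
      using y by (simp add: rotate_rotate rotate_conv_mod[of k x])
    also have "\<dots> = x"
    proof (cases "x = []")
      case False then show ?thesis by simp
    qed simp
    finally show ?thesis by simp
  qed
  show ?thesis unfolding R_def
    apply safe
    subgoal for z j using y by (metis rotate_rotate)
    subgoal for z j using x by (metis rotate_rotate)
    done
qed

lemma x_in_R: "x \<in> R x" unfolding R_def by (rule CollectI, rule exI[of _ 0]) simp


theorem mainTheorem7:
  fixes V :: nat and E :: "(nat \<times> nat) set"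
  assumes "simple_graph V E" and "E \<noteq> {}"
  shows "real (N_Euler E) = 2 / real (card E) * (\<Sum>b\<in>B_Euler E. real_of_int (Nb V E b))"
proof -
  define m where "m = card E div 2"
  define EL where "EL = {es. euler_list E es}"
  have g: "simple_graph V E" by fact
  have EV: "E \<subseteq> {1..V} \<times> {1..V}" using g by (simp add: simple_graph_def)
  have finE: "finite E" using EV by (rule finite_subset) auto
  have cE: "card E = 2 * m" using card_E[OF g] unfolding m_def by simp
  have "card E > 0" using finE assms(2) by (simp add: card_gt_0_iff)
  then have m1: "m \<ge> 1" using cE by simp
  have ELU: "EL = (\<Union>b\<in>B_Euler E. D b m)"
    using euler_char[OF g m1[unfolded m_def]] unfolding EL_def m_def by auto
  have finB: "finite (B_Euler E)"
    by (rule finite_subset[of _ "Pow E"]) (auto simp: B_Euler_def finE)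
  have finD: "\<And>b. b \<in> B_Euler E \<Longrightarrow> finite (D b m)"
  proof -
    fix b assume "b \<in> B_Euler E"
    then have "finite b" using finE by (auto simp: B_Euler_def intro: finite_subset)
    then show "finite (D b m)" unfolding D_def by (auto intro: finite_subset[OF _ finite_closedw])
  qed
  have finEL: "finite EL" unfolding ELU using finB finD by auto
  have "(\<Sum>b\<in>B_Euler E. real_of_int (Nb V E b)) = (\<Sum>b\<in>B_Euler E. real (card (D b m)))"
  proof (rule sum.cong[OF refl])
    fix b assume "b \<in> B_Euler E"
    then have "b \<subseteq> {1..V} \<times> {1..V}" using EV by (auto simp: B_Euler_def)
    then show "real_of_int (Nb V E b) = real (card (D b m))"
      using Nb_eq[of b V E] m1 unfolding m_def by simp
  qed
  also have "\<dots> = real (\<Sum>b\<in>B_Euler E. card (D b m))" by simp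
  also have "(\<Sum>b\<in>B_Euler E. card (D b m)) = card EL"
    unfolding ELU
  proof (rule card_UN_disjoint[symmetric])
    show "\<forall>i\<in>B_Euler E. \<forall>j\<in>B_Euler E. i \<noteq> j \<longrightarrow> D i m \<inter> D j m = {}"
      by (auto simp: D_def)
  qed (use finB finD in auto)
  finally have S: "(\<Sum>b\<in>B_Euler E. real_of_int (Nb V E b)) = real (card EL)" .
  have NE: "N_Euler E = card (R ` EL)"
    unfolding N_Euler_def EL_def R_def by (rule arg_cong[where f=card]) blast
  have UR: "\<Union> (R ` EL) = EL"
  proof safe
    fix x es assume "es \<in> EL" "x \<in> R es"
    then show "x \<in> EL" by (auto simp: EL_def R_def euler_rotate)
  next
    fix x assume "x \<in> EL" then show "x \<in> \<Union> (R ` EL)" using x_in_R by blast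
  qed
  have "m * card (R ` EL) = card (\<Union> (R ` EL))"
  proof (rule card_partition)
    show "finite (R ` EL)" using finEL by simp
    show "finite (\<Union> (R ` EL))" using UR finEL by simp
    show "\<And>c. c \<in> R ` EL \<Longrightarrow> card c = m"
    proof -
      fix c assume "c \<in> R ` EL"
      then obtain es where c: "c = R es" and es: "es \<in> EL" by auto
      have el: "euler_list E es" using es by (simp add: EL_def)
      then have "distinct es" "es \<noteq> []" unfolding euler_list_def by (auto simp: distinct_map)
      moreover have "length es = m" using es unfolding ELU by (auto simp: D_def closedw_def)
      ultimately show "card c = m" using c card_R by metis
    qed
    show "\<And>c1 c2. c1 \<in> R ` EL \<Longrightarrow> c2 \<in> R ` EL \<Longrightarrow> c1 \<noteq> c2 \<Longrightarrow> c1 \<inter> c2 = {}"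
      using R_eq by blast
  qed
  then have P: "m * N_Euler E = card EL" using NE UR by simp
  show ?thesis unfolding S cE P[symmetric] using m1 by simp
qed

end
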